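(* Let $p$ be a prime, $m\ge 0$ an integer, $T\ge 0$ and $\lambda>0$ real, and suppose $1\le m+\lceil \log_p\lambda\rceil$. Then $$\Pr\Big(\sup_{0\le s\le T}\frac{\big|p^m S^{(p)}_{\lfloor D_p p^{mb}s\rfloor}\big|_p}{p}<\lambda\Big)=\Big(1-\frac{(p[\lambda]_p)^{-b}}{p^{mb}}\Big)^{\lfloor D_p p^{mb}T\rfloor}.$$
   Context: Fix a real exponent $b>0$. For a prime $p$, $\mathbb{Q}_p$ denotes the $p$-adic numbers with absolute value $|\cdot|_p$ and $\mathbb{Z}_p$ its closed unit ball. Let $G_p\subset\mathbb{Q}_p$ be the set of $p$-adic numbers of the form $\sum_{k<0}a_kp^k$ with $a_k\in\{0,\dots,p-1\}$, only finitely many nonzero; $G_p$ is a set of representatives of $\mathbb{Q}_p/\mathbb{Z}_p$ and is given the group structure of $\mathbb{Q}_p/\mathbb{Z}_p$. Let $X^{(p)}$ be a $G_p$-valued random variable with $\Pr(|X^{(p)}|_p=p^k)=(p^b-1)p^{-kb}$ for every integer $k\ge1$, and, conditionally on $|X^{(p)}|_p=p^k$, uniformly distributed on the finite set $\{x\in G_p:|x|_p=p^k\}$. Let $X^{(p)}_1,X^{(p)}_2,\dots$ be i.i.d. copies of $X^{(p)}$ and $S^{(p)}_n=X^{(p)}_1+\dots+X^{(p)}_n$ (sum in the group $G_p$), $S^{(p)}_0=0$. Given a nonnegative real $\sigma_p$ (the diffusion coefficient at $p$), put $D_p=\frac{p^b(p-1)}{p^{b+1}-1}\sigma_p$. For $\lambda>0$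 write $[\lambda]_p=p^{\lceil\log_p\lambda\rceil-1}$. *)

theory Defs
  imports "HOL-Probability.Probability" "HOL-Computational_Algebra.Computational_Algebra"
begin

definition padic_val :: "nat \<Rightarrow> rat \<Rightarrow> int" where
  "padic_val p x = int (multiplicity (int p) (fst (quotient_of x)))
                 - int (multiplicity (int p) (snd (quotient_of x)))"

definition padic_abs :: "nat \<Rightarrow> rat \<Rightarrow> real" where
  "padic_abs p x = (if x = 0 then 0 else real p powr (- real_of_int (padic_val p x)))"

text \<open>G_p: the p-adic numbers sum_{k<0} a_k p^k with finitely many nonzero digits,
  i.e. the rationals in [0,1) whose denominator is a power of p. The group law of
  Q_p/Z_p is addition modulo 1, i.e. x + y followed by frac.\<close>
definition Gp :: "nat \<Rightarrow> rat set" where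
  "Gp p = {x. 0 \<le> x \<and> x < 1 \<and> (\<exists>k::nat. x * of_nat p ^ k \<in> \<int>)}"

definition Gp_add :: "rat \<Rightarrow> rat \<Rightarrow> rat" where
  "Gp_add x y = frac (x + y)"

definition walk :: "(nat \<Rightarrow> 'w \<Rightarrow> rat) \<Rightarrow> nat \<Rightarrow> 'w \<Rightarrow> rat" where
  "walk X n \<omega> = frac (\<Sum>i<n. X i \<omega>)"

definition diff_coeff :: "nat \<Rightarrow> real \<Rightarrow> real \<Rightarrow> real" where
  "diff_coeff p b \<sigma> = real p powr b * (real p - 1) / (real p powr (b + 1) - 1) * \<sigma>"

definition pfloor :: "nat \<Rightarrow> real \<Rightarrow> real" where
  "pfloor p l = real p powr (real_of_int (\<lceil>log (real p) l\<rceil> - 1))"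

end

theory Submission
  imports Defs
begin


lemma pint: "prime (p::nat) \<Longrightarrow> prime (int p)" by simp

lemma val_pos:
  assumes "prime p" "a \<noteq> 0" "\<not> int p dvd a"
  shows "padic_val p (of_int (a * int p ^ e)) = int e"
proof -
  have pp: "prime (int p)" using assms by simp
  have "a * int p ^ e \<noteq> 0" using assms pp by (auto simp: prime_gt_0_int)
  hence "multiplicity (int p) (a * int p ^ e) = e"
    using assms pp by (simp add: multiplicity_prime_elem_times_other multiplicity_same_power prime_imp_prime_elem)
  thus ?thesis unfolding padic_val_def quotient_of_rat_of_int by simp
qed

lemma val_neg:
  assumes "prime p" "a \<noteq> 0" "\<not> int p dvd a"
  shows "padic_val p (of_int a / of_int (int p ^ j)) = - int j"
proof -
  have pp: "prime (int p)" using assms by simp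
  have cop: "coprime a (int p ^ j)"
  proof -
    have "coprime (int p) a" using assms pp by (simp add: prime_imp_coprime)
    thus ?thesis by (simp add: coprime_commute)
  qed
  have pos: "0 < int p ^ j" using assms(1) by (simp add: prime_gt_0_nat)
  have q: "quotient_of (of_int a / of_int (int p ^ j)) = (a, int p ^ j)"
    by (metis Fract_of_int_quotient quotient_of_Fract normalize_stable cop pos)
  have "multiplicity (int p) a = 0" using assms by (simp add: not_dvd_imp_multiplicity_0)
  moreover have "multiplicity (int p) (int p ^ j) = j" using pp
    by (simp add: multiplicity_same_power prime_gt_0_int)
  ultimately show ?thesis unfolding padic_val_def q by simp
qed

lemma rep:
  assumes "prime p" "x \<in> Gp p" "x \<noteq> 0"
  shows "\<exists>a j. j \<ge> 1 \<and> a > 0 \<and> \<not> int p dvd a \<and> x = of_int a / of_int (int p ^ j)"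
proof -
  have pp: "prime (int p)" using assms by simp
  have p0: "int p > 0" using assms(1) by (simp add: prime_gt_0_nat)
  from assms(2) have x01: "0 \<le> x" "x < 1" and "\<exists>k::nat. x * of_nat p ^ k \<in> \<int>" by (auto simp: Gp_def)
  then obtain k n where kn: "x * of_nat p ^ k = of_int n" by (metis Ints_cases)
  have xp: "x > 0" using x01 assms(3) by simp
  have "(of_nat p ^ k :: rat) > 0" using p0 by simp
  hence "of_int n > (0::rat)" using kn xp by (metis mult_pos_pos)
  hence n0: "n > 0" by simp
  define t where "t = multiplicity (int p) n"
  define a where "a = n div int p ^ t"
  have na: "n = int p ^ t * a" unfolding a_def t_def by (simp add: multiplicity_dvd)
  have ndvd: "\<not> int p dvd a" unfolding a_def t_def
    using multiplicity_decompose[of n "int p"] n0 pp prime_gt_1_nat[OF assms(1)] by (simp add: prime_elem_not_unit prime_imp_prime_elem)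
  have a0: "a > 0" using n0 na p0 by (simp add: zero_less_mult_iff)
  have tk: "t < k"
  proof (rule ccontr)
    assume "\<not> t < k"
    hence "int p ^ t = int p ^ k * int p ^ (t - k)" by (simp add: power_add[symmetric])
    hence "x = of_int (int p ^ (t - k) * a)" using kn na p0
      by (simp add: field_simps)
    moreover have "int p ^ (t - k) * a \<ge> 1" using a0 p0
      by (metis mult_pos_pos one_le_power zero_less_power int_one_le_iff_zero_less)
    ultimately show False using x01 by (metis of_int_le_iff of_int_1 not_less)
  qed
  have "(of_nat p :: rat) ^ k = of_nat p ^ t * of_nat p ^ (k - t)" using tk by (simp add: power_add[symmetric])
  hence "x = of_int a / of_int (int p ^ (k - t))" using kn na p0
    by (simp add: field_simps)
  thus ?thesis using tk a0 ndvd by (intro exI[of _ a] exI[of _ "k - t"]) auto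
qed

lemma abs_scaled:
  assumes "prime p" "a \<noteq> 0" "\<not> int p dvd a"
  shows "padic_abs p (of_nat p ^ m * (of_int a / of_int (int p ^ j))) = real p powr (real j - real m)"
proof -
  have p0: "int p > 0" using assms(1) by (simp add: prime_gt_0_nat)
  show ?thesis
  proof (cases "j \<le> m")
    case True
    have "(of_nat p :: rat) ^ m = of_nat p ^ j * of_nat p ^ (m - j)" using True by (simp add: power_add[symmetric])
    hence e: "of_nat p ^ m * (of_int a / of_int (int p ^ j)) = (of_int (a * int p ^ (m - j)) :: rat)"
      using p0 by (simp add: field_simps)
    have nz: "(of_int (a * int p ^ (m - j)) :: rat) \<noteq> 0" using assms p0 by simp
    show ?thesis unfolding e padic_abs_def using nz val_pos[OF assms, of "m - j"] True
      by (simp add: of_nat_diff)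
  next
    case False
    have "(of_nat p :: rat) ^ j = of_nat p ^ m * of_nat p ^ (j - m)" using False by (simp add: power_add[symmetric])
    hence e: "of_nat p ^ m * (of_int a / of_int (int p ^ j)) = (of_int a / of_int (int p ^ (j - m)) :: rat)"
      using p0 by (simp add: field_simps)
    have nz: "(of_int a / of_int (int p ^ (j - m)) :: rat) \<noteq> 0" using assms p0 by simp
    show ?thesis unfolding e padic_abs_def using nz val_neg[OF assms, of "j - m"] False
      by (simp add: of_nat_diff)
  qed
qed

lemma B_iff:
  assumes "prime p" "a \<noteq> 0" "\<not> int p dvd a"
  shows "(of_int a / of_int (int p ^ j)) * (of_nat p ^ k :: rat) \<in> \<int> \<longleftrightarrow> j \<le> k"
proof -
  have p0: "int p > 0" using assms(1) by (simp add: prime_gt_0_nat)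
  show ?thesis
  proof (cases "j \<le> k")
    case True
    have "(of_nat p :: rat) ^ k = of_nat p ^ j * of_nat p ^ (k - j)" using True by (simp add: power_add[symmetric])
    hence "(of_int a / of_int (int p ^ j)) * (of_nat p ^ k :: rat) = of_int (a * int p ^ (k - j))"
      using p0 by (simp add: field_simps)
    thus ?thesis using True by simp
  next
    case False
    have "(of_nat p :: rat) ^ j = of_nat p ^ k * of_nat p ^ (j - k)" using False by (simp add: power_add[symmetric])
    hence e: "(of_int a / of_int (int p ^ j)) * (of_nat p ^ k :: rat) = of_int a / of_int (int p ^ (j - k))"
      using p0 by (simp add: field_simps)
    have "\<not> (of_int a / of_int (int p ^ (j - k)) :: rat) \<in> \<int>"
    proof
      assume "(of_int a / of_int (int p ^ (j - k)) :: rat) \<in> \<int>"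
      then obtain z where "(of_int a / of_int (int p ^ (j - k)) :: rat) = of_int z" by (metis Ints_cases)
      hence "(of_int a :: rat) = of_int (z * int p ^ (j - k))" using p0 by (simp add: field_simps)
      hence "a = z * int p ^ (j - k)" by (simp only: of_int_eq_iff)
      moreover have "int p dvd int p ^ (j - k)" using False by (simp add: dvd_power)
      ultimately show False using assms(3) by simp
    qed
    thus ?thesis using e False by simp
  qed
qed

lemma abs_rep:
  assumes "prime p" "a \<noteq> 0" "\<not> int p dvd a"
  shows "padic_abs p (of_int a / of_int (int p ^ j)) = real p ^ j"
  using abs_scaled[OF assms, of 0 j] assms(1) by (simp add: powr_realpow prime_gt_0_nat)

lemma P_iff_B:
  assumes "prime p" "x \<in> Gp p" "lam > 0" "1 \<le> int m + \<lceil>log (real p) lam\<rceil>"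
  shows "padic_abs p (of_nat p ^ m * x) / real p < lam \<longleftrightarrow>
         x * of_nat p ^ nat (int m + \<lceil>log (real p) lam\<rceil>) \<in> \<int>"
proof (cases "x = 0")
  case True
  thus ?thesis using assms by (simp add: padic_abs_def)
next
  case False
  then obtain a j where aj: "j \<ge> 1" "a > 0" "\<not> int p dvd a" "x = of_int a / of_int (int p ^ j)"
    using rep[OF assms(1,2)] by blast
  have p1: "real p > 1" using prime_gt_1_nat[OF assms(1)] by simp
  have a0: "a \<noteq> 0" using aj by simp
  have "padic_abs p (of_nat p ^ m * x) / real p = real p powr (real j - real m - 1)"
    using abs_scaled[OF assms(1) a0 aj(3), of m j] aj(4) p1 by (simp add: powr_diff)
  also have "\<dots> < lam \<longleftrightarrow> real j - real m - 1 < log (real p) lam"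
    using powr_less_iff[OF p1 assms(3)] by simp
  also have "\<dots> \<longleftrightarrow> int j - int m - 1 < \<lceil>log (real p) lam\<rceil>"
    by (simp add: less_ceiling_iff)
  also have "\<dots> \<longleftrightarrow> j \<le> nat (int m + \<lceil>log (real p) lam\<rceil>)" using assms(4) by linarith
  also have "\<dots> \<longleftrightarrow> x * of_nat p ^ nat (int m + \<lceil>log (real p) lam\<rceil>) \<in> \<int>"
    using B_iff[OF assms(1) a0 aj(3)] aj(4) by simp
  finally show ?thesis .
qed

lemma tail:
  assumes "prime p" "x \<in> Gp p"
  shows "\<not> x * of_nat p ^ k \<in> \<int> \<longleftrightarrow> (\<exists>i::nat. padic_abs p x = real p ^ (i + k + 1))"
proof (cases "x = 0")
  case True
  thus ?thesis using assms prime_gt_0_nat[OF assms(1)] by (simp add: padic_abs_def)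
next
  case False
  then obtain a j where aj: "j \<ge> 1" "a > 0" "\<not> int p dvd a" "x = of_int a / of_int (int p ^ j)"
    using rep[OF assms(1,2)] by blast
  have p1: "real p > 1" using prime_gt_1_nat[OF assms(1)] by simp
  have a0: "a \<noteq> 0" using aj by simp
  have "(\<exists>i::nat. real p ^ j = real p ^ (i + k + 1)) \<longleftrightarrow> (\<exists>i::nat. j = i + k + 1)"
    using power_inject_exp[OF p1] by metis
  also have "\<dots> \<longleftrightarrow> \<not> j \<le> k" by presburger
  finally show ?thesis using B_iff[OF assms(1) a0 aj(3), of j k] abs_rep[OF assms(1) a0 aj(3), of j] aj(4)
    by simp
qed

lemma Ints_frac_mult:
  assumes "y * q \<in> \<int>" "q \<in> \<int>"
  shows "frac y * q \<in> (\<int> :: rat set)"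
proof -
  have e: "frac y * q = y * q - of_int \<lfloor>y\<rfloor> * q" unfolding frac_def by (rule left_diff_distrib)
  have "of_int \<lfloor>y\<rfloor> * q \<in> \<int>" using assms(2) by (intro Ints_mult) simp_all
  thus ?thesis unfolding e using assms(1) by (intro Ints_diff)
qed

lemma walkB:
  fixes N :: nat and x :: "nat \<Rightarrow> rat"
  assumes "q \<in> (\<int> :: rat set)"
  shows "(\<forall>n\<le>N. frac (\<Sum>i<n. x i) * q \<in> \<int>) \<longleftrightarrow> (\<forall>i<N. x i * q \<in> \<int>)"
proof
  assume H: "\<forall>i<N. x i * q \<in> \<int>"
  show "\<forall>n\<le>N. frac (\<Sum>i<n. x i) * q \<in> \<int>"
  proof (intro allI impI)
    fix n assume "n \<le> N"
    hence "\<forall>i<n. x i * q \<in> \<int>" using H less_le_trans by blast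
    hence "(\<Sum>i<n. x i * q) \<in> \<int>" by (intro Ints_sum) simp
    hence "(\<Sum>i<n. x i) * q \<in> \<int>" by (simp only: sum_distrib_right)
    thus "frac (\<Sum>i<n. x i) * q \<in> \<int>" using Ints_frac_mult assms by blast
  qed
next
  assume H: "\<forall>n\<le>N. frac (\<Sum>i<n. x i) * q \<in> \<int>"
  show "\<forall>i<N. x i * q \<in> \<int>"
  proof (intro allI impI)
    fix i assume "i < N"
    define S0 where "S0 = (\<Sum>j<i. x j)"
    have S1: "(\<Sum>j<Suc i. x j) = S0 + x i" by (simp add: S0_def)
    have h1: "frac (S0 + x i) * q \<in> \<int>" using H \<open>i < N\<close> S1 by (metis Suc_leI)
    have h2: "frac S0 * q \<in> \<int>" using H \<open>i < N\<close> S0_def by auto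
    have e: "x i * q = (frac (S0 + x i) * q - frac S0 * q)
        + (of_int \<lfloor>S0 + x i\<rfloor> * q - of_int \<lfloor>S0\<rfloor> * q)"
      unfolding frac_def by (simp add: algebra_simps)
    have h3: "of_int \<lfloor>S0 + x i\<rfloor> * q \<in> \<int>" "of_int \<lfloor>S0\<rfloor> * q \<in> \<int>"
      using assms by (intro Ints_mult; simp)+
    show "x i * q \<in> \<int>" unfolding e using h1 h2 h3 by (intro Ints_add Ints_diff)
  qed
qed

lemma Gp_sum:
  fixes n :: nat
  assumes "\<forall>i<n. x i \<in> Gp p"
  shows "\<exists>k. (\<Sum>i<n. x i) * of_nat p ^ k \<in> (\<int> :: rat set)"
  using assms
proof (induction n)
  case 0 thus ?case by simp
next
  case (Suc n)
  then obtain k1 where k1: "(\<Sum>i<n. x i) * of_nat p ^ k1 \<in> (\<int> :: rat set)" by auto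
  obtain k2 where k2: "x n * of_nat p ^ k2 \<in> (\<int> :: rat set)" using Suc.prems by (auto simp: Gp_def)
  have "(\<Sum>i<Suc n. x i) * of_nat p ^ (k1 + k2) =
        ((\<Sum>i<n. x i) * of_nat p ^ k1) * of_nat p ^ k2 + (x n * of_nat p ^ k2) * of_nat p ^ k1"
    by (simp add: power_add algebra_simps)
  also have "\<dots> \<in> \<int>" by (rule Ints_add; rule Ints_mult; simp add: k1 k2)
  finally show ?case by blast
qed

lemma walk_Gp:
  assumes "\<forall>i. X i w \<in> Gp p"
  shows "walk X n w \<in> Gp p"
proof -
  obtain k where k: "(\<Sum>i<n. X i w) * of_nat p ^ k \<in> (\<int> :: rat set)" using Gp_sum[of n "\<lambda>i. X i w" p] assms by auto
  have "frac (\<Sum>i<n. X i w) * of_nat p ^ k \<in> \<int>" by (rule Ints_frac_mult[OF k]) simp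
  thus ?thesis unfolding walk_def Gp_def using frac_lt_1 frac_ge_0 by blast
qed

lemma walk_meas:
  assumes "\<And>i. X i \<in> measurable M (count_space UNIV)"
  shows "walk X n \<in> measurable M (count_space (UNIV :: rat set))"
proof -
  have S: "(\<lambda>w. \<Sum>i<n. X i w) \<in> measurable M (count_space (UNIV :: rat set))"
  proof (induction n)
    case 0 thus ?case by simp
  next
    case (Suc n)
    have "(\<lambda>w. (\<lambda>q w. q + X n w) (\<Sum>i<n. X i w) w) \<in> measurable M (count_space UNIV)"
    proof (rule measurable_compose_countable[OF _ Suc.IH])
      fix q :: rat
      show "(\<lambda>w. q + X n w) \<in> measurable M (count_space UNIV)"
        using measurable_comp[OF assms[of n] measurable_count_space[of "\<lambda>r. q + r"]] by (simp add: o_def)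
    qed
    thus ?case by simp
  qed
  show ?thesis unfolding walk_def
    using measurable_comp[OF S measurable_count_space[of frac]] by (simp add: o_def)
qed

lemma img_floor:
  assumes "c \<ge> 0" "T \<ge> (0::real)"
  shows "(\<lambda>s. nat \<lfloor>c * s\<rfloor>) ` {0..T} = {..nat \<lfloor>c * T\<rfloor>}"
proof
  show "(\<lambda>s. nat \<lfloor>c * s\<rfloor>) ` {0..T} \<subseteq> {..nat \<lfloor>c * T\<rfloor>}"
    using assms by (auto intro!: nat_mono floor_mono mult_left_mono)
next
  show "{..nat \<lfloor>c * T\<rfloor>} \<subseteq> (\<lambda>s. nat \<lfloor>c * s\<rfloor>) ` {0..T}"
  proof
    fix n assume n: "n \<in> {..nat \<lfloor>c * T\<rfloor>}"
    show "n \<in> (\<lambda>s. nat \<lfloor>c * s\<rfloor>) ` {0..T}"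
    proof (cases "c = 0")
      case True
      hence "n = 0" using n by simp
      thus ?thesis using assms True by (intro image_eqI[of _ _ 0]) simp_all
    next
      case False
      hence cp: "c > 0" using assms by simp
      have "\<lfloor>c * T\<rfloor> \<ge> 0" using cp assms by simp
      hence "int n \<le> \<lfloor>c * T\<rfloor>" using n by (metis atMost_iff le_nat_iff)
      hence "real n \<le> c * T" by (metis le_floor_iff of_int_of_nat_eq)
      hence "real n / c \<le> T" using cp by (simp add: divide_le_eq mult.commute)
      moreover have "nat \<lfloor>c * (real n / c)\<rfloor> = n" using cp by simp
      moreover have "real n / c \<ge> 0" using cp by simp
      ultimately show ?thesis by (intro image_eqI[of _ _ "real n / c"]) simp_all
    qed
  qed
qed

lemma ball_atMost: "(\<forall>n\<in>{..N::nat}. P n) = (\<forall>n\<le>N. P n)" by auto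
lemma ball_lessThan: "(\<forall>n\<in>{..<N::nat}. P n) = (\<forall>n<N. P n)" by auto



theorem lemma1:
  fixes M :: "'w measure" and X :: "nat \<Rightarrow> 'w \<Rightarrow> rat"
    and p m :: nat and b \<sigma> T lam :: real
  assumes "prob_space M"
    and "b > 0" and "prime p" and "\<sigma> \<ge> 0" and "T \<ge> 0" and "lam > 0"
    and "1 \<le> int m + \<lceil>log (real p) lam\<rceil>"
    and meas: "\<And>i. X i \<in> measurable M (count_space UNIV)"
    and indep: "prob_space.indep_vars M (\<lambda>_. count_space UNIV) X UNIV"
    and range: "\<And>i. AE \<omega> in M. X i \<omega> \<in> Gp p"
    and norm_dist: "\<And>i k. k \<ge> 1 \<Longrightarrow>
         measure M {\<omega> \<in> space M. padic_abs p (X i \<omega>) = real p ^ k}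
           = (real p powr b - 1) * real p powr (- (real k * b))"
    and unif: "\<And>i k x. k \<ge> 1 \<Longrightarrow> x \<in> Gp p \<Longrightarrow> padic_abs p x = real p ^ k \<Longrightarrow>
         measure M {\<omega> \<in> space M. X i \<omega> = x}
           = measure M {\<omega> \<in> space M. padic_abs p (X i \<omega>) = real p ^ k}
             / real (card {y \<in> Gp p. padic_abs p y = real p ^ k})"
  shows "measure M {\<omega> \<in> space M.
            (SUP s\<in>{0..T}. padic_abs p (of_nat p ^ m *
               walk X (nat \<lfloor>diff_coeff p b \<sigma> * real p powr (real m * b) * s\<rfloor>) \<omega>) / real p) < lam}
         = (1 - (real p * pfloor p lam) powr (- b) / real p powr (real m * b))
             ^ nat \<lfloor>diff_coeff p b \<sigma> * real p powr (real m * b) * T\<rfloor>"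
proof -
  interpret P: prob_space M by fact
  have p1: "real p > 1" using prime_gt_1_nat[OF \<open>prime p\<close>] by simp
  define K where "K = int m + \<lceil>log (real p) lam\<rceil>"
  define k where "k = nat K"
  have Kk: "int k = K" using assms(7) unfolding K_def k_def by simp
  define c where "c = diff_coeff p b \<sigma> * real p powr (real m * b)"
  define N where "N = nat \<lfloor>c * T\<rfloor>"
  define f where "f n \<omega> = padic_abs p (of_nat p ^ m * walk X n \<omega>) / real p" for n \<omega>
  define Bk where "Bk x \<longleftrightarrow> x * of_nat p ^ k \<in> (\<int>::rat set)" for x :: rat
  have hs: "{\<omega> \<in> space M. Q (X i \<omega>)} \<in> sets M" for Q i
  proof -
    have "X i -` {x. Q x} \<inter> space M \<in> sets M" by (rule measurable_sets[OF meas]) simp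
    moreover have "X i -` {x. Q x} \<inter> space M = {\<omega> \<in> space M. Q (X i \<omega>)}" by blast
    ultimately show ?thesis by simp
  qed
  have c0: "c \<ge> 0"
  proof -
    have "real p powr (b + 1) > 1" using p1 assms(2) by simp
    hence "diff_coeff p b \<sigma> \<ge> 0" unfolding diff_coeff_def using p1 assms(4) by simp
    thus ?thesis unfolding c_def by simp
  qed
  have img: "(\<lambda>s. nat \<lfloor>c * s\<rfloor>) ` {0..T} = {..N}" unfolding N_def by (rule img_floor[OF c0 assms(5)])
  have E: "{\<omega> \<in> space M.
            (SUP s\<in>{0..T}. padic_abs p (of_nat p ^ m *
               walk X (nat \<lfloor>diff_coeff p b \<sigma> * real p powr (real m * b) * s\<rfloor>) \<omega>) / real p) < lam}
         = {\<omega> \<in> space M. \<forall>n\<le>N. f n \<omega> < lam}"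
  proof -
    have "(SUP s\<in>{0..T}. padic_abs p (of_nat p ^ m *
               walk X (nat \<lfloor>diff_coeff p b \<sigma> * real p powr (real m * b) * s\<rfloor>) \<omega>) / real p)
          = (SUP n\<in>{..N}. f n \<omega>)" for \<omega>
    proof -
      have "(SUP n\<in>{..N}. f n \<omega>) = (SUP s\<in>{0..T}. f (nat \<lfloor>c * s\<rfloor>) \<omega>)"
        by (simp only: img[symmetric] image_image)
      thus ?thesis by (simp add: f_def c_def)
    qed
    moreover have "(SUP n\<in>{..N}. f n \<omega>) < lam \<longleftrightarrow> (\<forall>n\<le>N. f n \<omega> < lam)" for \<omega>
      by (simp add: cSup_eq_Max Max_less_iff) auto
    ultimately show ?thesis by simp
  qed
  define Q where "Q = {\<omega> \<in> space M. \<forall>i<N. Bk (X i \<omega>)}"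
  have wm: "walk X n \<in> measurable M (count_space UNIV)" for n using walk_meas[OF meas] .
  have Em: "{\<omega> \<in> space M. \<forall>n\<le>N. f n \<omega> < lam} \<in> sets M"
  proof -
    have each: "{\<omega> \<in> space M. f n \<omega> < lam} \<in> sets M" for n
    proof -
      have "walk X n -` {q. padic_abs p (of_nat p ^ m * q) / real p < lam} \<inter> space M \<in> sets M"
        by (rule measurable_sets[OF wm]) simp
      moreover have "walk X n -` {q. padic_abs p (of_nat p ^ m * q) / real p < lam} \<inter> space M
          = {\<omega> \<in> space M. f n \<omega> < lam}" unfolding f_def by blast
      ultimately show ?thesis by (simp only:)
    qed
    have "{\<omega> \<in> space M. \<forall>n\<in>{..N}. f n \<omega> < lam} \<in> sets M"
    proof (rule sets.sets_Collect_finite_All)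
      show "\<And>i. i \<in> {..N} \<Longrightarrow> {x \<in> space M. f i x < lam} \<in> sets M" using each by blast
    qed simp
    moreover have "{\<omega> \<in> space M. \<forall>n\<in>{..N}. f n \<omega> < lam} = {\<omega> \<in> space M. \<forall>n\<le>N. f n \<omega> < lam}" by (simp only: ball_atMost)
    ultimately show ?thesis by (simp only:)
  qed
  have Qm: "Q \<in> sets M"
  proof -
    have "{\<omega> \<in> space M. \<forall>i\<in>{..<N}. Bk (X i \<omega>)} \<in> sets M"
    proof (rule sets.sets_Collect_finite_All)
      show "\<And>i. i \<in> {..<N} \<Longrightarrow> {x \<in> space M. Bk (X i x)} \<in> sets M" using hs by blast
    qed simp
    moreover have "{\<omega> \<in> space M. \<forall>i\<in>{..<N}. Bk (X i \<omega>)} = Q" unfolding Q_def by (simp only: ball_lessThan)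
    ultimately show ?thesis by (simp only:)
  qed
  have AEG: "AE \<omega> in M. \<forall>i. X i \<omega> \<in> Gp p" using range by (simp add: AE_all_countable)
  have step2: "measure M {\<omega> \<in> space M. \<forall>n\<le>N. f n \<omega> < lam} = measure M Q"
  proof (rule measure_eq_AE[OF _ Em Qm])
    show "AE \<omega> in M. (\<omega> \<in> {\<omega> \<in> space M. \<forall>n\<le>N. f n \<omega> < lam}) = (\<omega> \<in> Q)"
      using AEG
    proof (rule AE_mp[OF _ AE_I2], intro impI)
      fix \<omega> assume w: "\<omega> \<in> space M" and G: "\<forall>i. X i \<omega> \<in> Gp p"
      have "f n \<omega> < lam \<longleftrightarrow> Bk (walk X n \<omega>)" for n
        unfolding f_def Bk_def k_def K_def using P_iff_B[OF assms(3) walk_Gp[of X \<omega> p n, OF G] assms(6,7)] by simp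
      hence "(\<forall>n\<le>N. f n \<omega> < lam) \<longleftrightarrow> (\<forall>n\<le>N. Bk (walk X n \<omega>))" by simp
      also have "\<dots> \<longleftrightarrow> (\<forall>i<N. Bk (X i \<omega>))"
        unfolding Bk_def walk_def by (rule walkB) simp
      finally show "(\<omega> \<in> {\<omega> \<in> space M. \<forall>n\<le>N. f n \<omega> < lam}) = (\<omega> \<in> Q)"
        using w unfolding Q_def by simp
    qed
  qed
  define A where "A i = {\<omega> \<in> space M. Bk (X i \<omega>)}" for i
  define r where "r = real p powr (- b)"
  have rpow: "r ^ n = real p powr (- (real n * b))" for n
  proof -
    have "r ^ n = real p powr (real n * - b)" unfolding r_def by (rule powr_power) (use p1 in simp)
    thus ?thesis by simp
  qed
  have r01: "0 < r" "r < 1" unfolding r_def using p1 assms(2) by (auto intro: powr_less_one)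
  have probA: "measure M (A i) = 1 - r ^ k" for i
  proof -
    define C where "C j = {\<omega> \<in> space M. padic_abs p (X i \<omega>) = real p ^ (j + k + 1)}" for j
    have Cm: "range C \<subseteq> sets M" unfolding C_def using hs by auto
    have disj: "disjoint_family C"
      unfolding disjoint_family_on_def C_def using power_inject_exp[OF p1] p1 by auto
    have "(\<lambda>j. measure M (C j)) sums measure M (\<Union>(range C))"
      by (rule P.finite_measure_UNION[OF Cm disj])
    moreover have "measure M (C j) = (real p powr b - 1) * r ^ (k + 1) * r ^ j" for j
    proof -
      have "measure M (C j) = (real p powr b - 1) * real p powr (- (real (j + k + 1) * b))"
        unfolding C_def by (rule norm_dist) simp
      also have "real p powr (- (real (j + k + 1) * b)) = r ^ (j + k + 1)"
        by (rule rpow[symmetric])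
      finally show ?thesis by (simp add: power_add algebra_simps)
    qed
    ultimately have "(\<lambda>j. (real p powr b - 1) * r ^ (k + 1) * r ^ j) sums measure M (\<Union>(range C))" by simp
    moreover have "(\<lambda>j. (real p powr b - 1) * r ^ (k + 1) * r ^ j) sums ((real p powr b - 1) * r ^ (k + 1) * (1 / (1 - r)))"
      using geometric_sums[of r] r01 by (intro sums_mult) simp
    ultimately have mU: "measure M (\<Union>(range C)) = (real p powr b - 1) * r ^ (k + 1) * (1 / (1 - r))"
      using sums_unique2 by blast
    have pb: "real p powr b = 1 / r" unfolding r_def using p1 by (simp add: powr_minus divide_inverse)
    have "measure M (\<Union>(range C)) = r ^ k"
      unfolding mU pb using r01 by (simp add: field_simps)
    moreover have "measure M (space M - A i) = measure M (\<Union>(range C))"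
    proof (rule measure_eq_AE)
      show "AE \<omega> in M. (\<omega> \<in> space M - A i) = (\<omega> \<in> \<Union>(range C))"
        using range[of i]
      proof (rule AE_mp[OF _ AE_I2], intro impI)
        fix \<omega> assume w: "\<omega> \<in> space M" and G: "X i \<omega> \<in> Gp p"
        show "(\<omega> \<in> space M - A i) = (\<omega> \<in> \<Union>(range C))"
          using tail[OF assms(3) G, of k] w unfolding A_def C_def Bk_def by auto
      qed
      show "space M - A i \<in> sets M" unfolding A_def using hs by auto
      show "\<Union>(range C) \<in> sets M" using Cm by auto
    qed
    moreover have "measure M (space M - A i) = 1 - measure M (A i)"
      unfolding A_def using hs by (simp add: P.prob_compl)
    ultimately show ?thesis by simp
  qed
  have indepS: "P.indep_sets (\<lambda>i. {X i -` S \<inter> space M | S. S \<in> sets (count_space UNIV)}) UNIV"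
    using indep[unfolded P.indep_vars_def2] by (rule conjunct2)
  have prodQ: "measure M Q = (1 - r ^ k) ^ N"
  proof (cases "N = 0")
    case True
    hence "Q = space M" unfolding Q_def by simp
    thus ?thesis using True P.prob_space by simp
  next
    case False
    have "Q = \<Inter>(A ` {..<N})" unfolding Q_def A_def using False by auto
    hence "measure M Q = (\<Prod>i\<in>{..<N}. measure M (A i))"
    proof (simp only:)
      show "measure M (\<Inter>(A ` {..<N})) = (\<Prod>i\<in>{..<N}. measure M (A i))"
      proof (rule P.indep_setsD[OF indepS])
        show "\<forall>j\<in>{..<N}. A j \<in> {X j -` S \<inter> space M | S. S \<in> sets (count_space UNIV)}"
          unfolding A_def by (auto intro!: exI[of _ "{x. Bk x}"])
      qed (use False in auto)
    qed
    thus ?thesis using probA by simp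
  qed
  have rk: "r ^ k = (real p * pfloor p lam) powr (- b) / real p powr (real m * b)"
  proof -
    have pf: "real p * pfloor p lam = real p powr (real_of_int \<lceil>log (real p) lam\<rceil>)"
      unfolding pfloor_def using p1 by (simp add: powr_add[symmetric] powr_diff)
    have rk': "real k = real m + real_of_int \<lceil>log (real p) lam\<rceil>"
    proof -
      have "real_of_int (int k) = real_of_int (int m + \<lceil>log (real p) lam\<rceil>)" using Kk K_def by simp
      thus ?thesis by simp
    qed
    have "(real p * pfloor p lam) powr (- b) / real p powr (real m * b)
        = real p powr (real_of_int \<lceil>log (real p) lam\<rceil> * - b) / real p powr (real m * b)"
      by (simp only: pf powr_powr)
    also have "\<dots> = real p powr (real_of_int \<lceil>log (real p) lam\<rceil> * - b - real m * b)"
      by (rule powr_diff[symmetric])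
    also have "real_of_int \<lceil>log (real p) lam\<rceil> * - b - real m * b = - (real k * b)"
      unfolding rk' by (simp add: algebra_simps)
    finally show ?thesis by (simp add: rpow)
  qed
  have "(1 - r ^ k) ^ N = (1 - (real p * pfloor p lam) powr (- b) / real p powr (real m * b))
             ^ nat \<lfloor>diff_coeff p b \<sigma> * real p powr (real m * b) * T\<rfloor>"
    by (simp only: rk N_def c_def)
  then show ?thesis by (simp only: E step2 prodQ)
qed

end
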